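(* Let $n,m\ge1$ and $C\in\mathbb{R}^{2m\times 2n}$. Suppose there exists a nonzero real $2n\times 2\ell$ matrix $T_1$ ($\ell\ge 1$) with $\mathrm{Range}(T_1)=\mathrm{Ker}(C)\cap\mathrm{Ker}(C\Sigma_n)$ and $\Sigma_nT_1=T_1\Sigma_\ell$. Let $G\in\mathbb{R}^{2n\times 2n}$ be symmetric and suppose $\mathrm{Range}(T_1)$ is invariant under $G$ (i.e. $G\,\mathrm{Range}(T_1)\subseteq\mathrm{Range}(T_1)$). Then the linear quantum system determined by $(G,C)$ has a DF subsystem with DF mode $T_1^\top\hat x$; that is, with $A=\Sigma_n(G+C^\top\Sigma_mC/2)$ and $\mathcal{O}=(C^\top,A^\top C^\top,\ldots,(A^\top)^{2n-1}C^\top)^\top$, one has $\mathcal{O}T_1=O$ and $\mathcal{O}\Sigma_nT_1=O$.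
   Context: For $k\ge1$, $\Sigma_k=\mathrm{diag}\{\Sigma,\ldots,\Sigma\}$ ($2k\times2k$) with $\Sigma=\begin{pmatrix}0&1\\-1&0\end{pmatrix}$. The linear quantum system determined by $(G,C)$ is $d\hat x=A\hat x\,dt+\Sigma_nC^\top\Sigma_m\,d\hat{\mathcal W}$, $d\hat{\mathcal W}^{\rm out}=C\hat x\,dt+d\hat{\mathcal W}$ with $A=\Sigma_n(G+C^\top\Sigma_mC/2)$, where $\hat x$ is a vector of $n$ canonical pairs with $\hat x\hat x^\top-(\hat x\hat x^\top)^\top=i\Sigma_n$. A DF mode is a variable $T^\top\hat x$ with $T^\top\Sigma_nT=\Sigma_\ell$ whose columns span a subspace lying in $\mathrm{Ker}(\mathcal{O})\cap\mathrm{Ker}(\mathcal{O}\Sigma_n)$ (equivalently uncontrollable w.r.t. the input $\hat{\mathcal W}$ and unobservable w.r.t. the output $\hat{\mathcal W}^{\rm out}$). *)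

theory Defs
  imports "Jordan_Normal_Form.Matrix_Kernel"
begin

(* Sigma_k = diag{Sigma,...,Sigma} (2k x 2k), Sigma = [[0,1],[-1,0]] *)
definition Sigma_mat :: "nat \<Rightarrow> real mat" where
  "Sigma_mat k = mat (2*k) (2*k) (\<lambda>(i,j).
      if i div 2 = j div 2 then (if even i \<and> odd j then 1 else if odd i \<and> even j then -1 else 0)
      else 0)"

definition mat_range :: "real mat \<Rightarrow> real vec set" where
  "mat_range T = {T *\<^sub>v x | x. x \<in> carrier_vec (dim_col T)}"

definition sys_A :: "nat \<Rightarrow> nat \<Rightarrow> real mat \<Rightarrow> real mat \<Rightarrow> real mat" where
  "sys_A n m G C = Sigma_mat n * (G + (1/2) \<cdot>\<^sub>m (transpose_mat C * Sigma_mat m * C))"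

(* observability matrix O = (C^T, A^T C^T, ..., (A^T)^(2n-1) C^T)^T,
   i.e. the vertical stack of the blocks C A^k, k = 0..2n-1 *)
definition obs_mat :: "nat \<Rightarrow> real mat \<Rightarrow> real mat \<Rightarrow> real mat" where
  "obs_mat n C A = mat ((2*n) * dim_row C) (dim_col C)
     (\<lambda>(i,j). (C * (A ^\<^sub>m (i div dim_row C))) $$ (i mod dim_row C, j))"

end

theory Submission
  imports Defs
begin

lemma Sigma_carrier[simp]: "Sigma_mat k \<in> carrier_mat (2*k) (2*k)"
  unfolding Sigma_mat_def by auto

lemma smult_mat_vec_zero:
  assumes "M \<in> carrier_mat nr nc" "v \<in> carrier_vec nc" "M *\<^sub>v v = 0\<^sub>v nr"
  shows "((a::real) \<cdot>\<^sub>m M) *\<^sub>v v = 0\<^sub>v nr"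
proof (rule eq_vecI)
  fix i assume i: "i < dim_vec (0\<^sub>v nr :: real vec)"
  have "(M *\<^sub>v v) $ i = 0" using assms(3) i by simp
  hence "row M i \<bullet> v = 0" using assms i index_mult_mat_vec[of i M v] by auto
  thus "((a \<cdot>\<^sub>m M) *\<^sub>v v) $ i = (0\<^sub>v nr) $ i" using assms i
    by (simp add: smult_scalar_prod_distrib[of _ nc])
qed (use assms in auto)

theorem proposition1:
  fixes n m l :: nat and C G T1 :: "real mat"
  assumes "n \<ge> 1" "m \<ge> 1" "l \<ge> 1"
    and "C \<in> carrier_mat (2*m) (2*n)"
    and "T1 \<in> carrier_mat (2*n) (2*l)"
    and "T1 \<noteq> 0\<^sub>m (2*n) (2*l)"
    and "mat_range T1 = mat_kernel C \<inter> mat_kernel (C * Sigma_mat n)"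
    and "Sigma_mat n * T1 = T1 * Sigma_mat l"
    and "G \<in> carrier_mat (2*n) (2*n)"
    and "transpose_mat G = G"
    and "\<forall>v \<in> mat_range T1. G *\<^sub>v v \<in> mat_range T1"
  shows "obs_mat n C (sys_A n m G C) * T1 = 0\<^sub>m ((2*n) * (2*m)) (2*l)
       \<and> obs_mat n C (sys_A n m G C) * Sigma_mat n * T1 = 0\<^sub>m ((2*n) * (2*m)) (2*l)"
proof -
  define K where "K = mat_range T1"
  define S where "S = Sigma_mat n"
  define A where "A = sys_A n m G C"
  have C: "C \<in> carrier_mat (2*m) (2*n)" and T: "T1 \<in> carrier_mat (2*n) (2*l)"
    and G: "G \<in> carrier_mat (2*n) (2*n)" using assms by auto
  have S: "S \<in> carrier_mat (2*n) (2*n)" unfolding S_def by simp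
  have Scar: "Sigma_mat m \<in> carrier_mat (2*m) (2*m)" by simp
  define M where "M = transpose_mat C * Sigma_mat m * C"
  have M: "M \<in> carrier_mat (2*n) (2*n)" unfolding M_def using C by auto
  have A: "A \<in> carrier_mat (2*n) (2*n)" unfolding A_def sys_A_def S_def[symmetric] M_def[symmetric]
    using S G M by auto
  have Kcar: "v \<in> carrier_vec (2*n)" if "v \<in> K" for v
    using that T unfolding K_def mat_range_def by auto
  have KC: "C *\<^sub>v v = 0\<^sub>v (2*m)" if "v \<in> K" for v
    using that C unfolding K_def assms(7) mat_kernel_def by auto
  have KS: "S *\<^sub>v v \<in> K" if "v \<in> K" for v
  proof -
    from that obtain x where x: "x \<in> carrier_vec (2*l)" "v = T1 *\<^sub>v x"
      unfolding K_def mat_range_def using T by auto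
    have "S *\<^sub>v v = (S * T1) *\<^sub>v x" using x S T by simp
    also have "\<dots> = (T1 * Sigma_mat l) *\<^sub>v x" using assms(8) S_def by simp
    also have "\<dots> = T1 *\<^sub>v (Sigma_mat l *\<^sub>v x)" using x T Sigma_carrier[of l] assoc_mult_mat_vec by blast
    finally show ?thesis unfolding K_def mat_range_def using T x
      by (auto intro!: exI[of _ "Sigma_mat l *\<^sub>v x"] mult_mat_vec_carrier[of _ "2*l" "2*l"])
  qed
  have KA: "A *\<^sub>v v \<in> K" if "v \<in> K" for v
  proof -
    have v: "v \<in> carrier_vec (2*n)" using Kcar that .
    have Mv: "M *\<^sub>v v = 0\<^sub>v (2*n)" unfolding M_def using C v KC[OF that]
      by (subst assoc_mult_mat_vec[of _ "2*n" "2*m"], auto)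
    have "A *\<^sub>v v = S *\<^sub>v ((G + (1/2) \<cdot>\<^sub>m M) *\<^sub>v v)"
      unfolding A_def sys_A_def S_def[symmetric] M_def[symmetric] using S G M v
      by (subst assoc_mult_mat_vec[of _ "2*n" "2*n"], auto)
    also have "(G + (1/2) \<cdot>\<^sub>m M) *\<^sub>v v = G *\<^sub>v v + ((1/2) \<cdot>\<^sub>m M) *\<^sub>v v"
      using G M v by (subst add_mult_distrib_mat_vec[of _ "2*n" "2*n"], auto)
    also have "((1/2) \<cdot>\<^sub>m M) *\<^sub>v v = 0\<^sub>v (2*n)" using smult_mat_vec_zero[OF M v Mv] .
    also have "G *\<^sub>v v + 0\<^sub>v (2*n) = G *\<^sub>v v" using G v by simp
    finally have "A *\<^sub>v v = S *\<^sub>v (G *\<^sub>v v)" .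
    moreover have "G *\<^sub>v v \<in> K" using assms(11) that K_def by simp
    ultimately show ?thesis using KS by simp
  qed
  have KP: "(A ^\<^sub>m k) *\<^sub>v v \<in> K" if "v \<in> K" for k v
    using that
  proof (induction k arbitrary: v)
    case 0
    then show ?case using A Kcar[OF 0] by simp
  next
    case (Suc k)
    have "(A ^\<^sub>m Suc k) *\<^sub>v v = (A ^\<^sub>m k) *\<^sub>v (A *\<^sub>v v)"
      using A Kcar[OF Suc.prems] by (simp add: assoc_mult_mat_vec[of _ "2*n" "2*n"])
    then show ?case using Suc.IH KA Suc.prems by simp
  qed
  have colK: "col T1 j \<in> K" if "j < 2*l" for j
  proof -
    have "col T1 j = col (T1 * 1\<^sub>m (2*l)) j" using T right_mult_one_mat by metis
    also have "\<dots> = T1 *\<^sub>v col (1\<^sub>m (2*l)) j" using T that col_mult2 one_carrier_mat by blast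
    also have "\<dots> = T1 *\<^sub>v unit_vec (2*l) j" using that by simp
    finally show ?thesis unfolding K_def mat_range_def using T by auto
  qed
  have O1: "obs_mat n C A * T1 = 0\<^sub>m ((2*n) * (2*m)) (2*l)"
  proof (rule eq_matI)
    fix i j assume i: "i < dim_row (0\<^sub>m ((2*n) * (2*m)) (2*l) :: real mat)"
      and j: "j < dim_col (0\<^sub>m ((2*n) * (2*m)) (2*l) :: real mat)"
    define k where "k = i div (2*m)"
    define r where "r = i mod (2*m)"
    have r: "r < 2*m" unfolding r_def using assms(2) by simp
    have CA: "C * A ^\<^sub>m k \<in> carrier_mat (2*m) (2*n)" using C A by auto
    have row: "row (obs_mat n C A) i = row (C * A ^\<^sub>m k) r"
      proof (rule eq_vecI)
      fix ia assume ia: "ia < dim_vec (row (C * A ^\<^sub>m k) r)"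
      hence ia2: "ia < 2*n" using CA A by (simp split: if_splits)
      show "row (obs_mat n C A) i $ ia = row (C * A ^\<^sub>m k) r $ ia"
        unfolding obs_mat_def using C A i r CA ia2 by (simp add: k_def r_def)
    qed (unfold obs_mat_def, use C CA A in simp)
    have cK: "col T1 j \<in> K" using colK j by simp
    have "(obs_mat n C A * T1) $$ (i,j) = row (C * A ^\<^sub>m k) r \<bullet> col T1 j"
      using i j row C T unfolding obs_mat_def by simp
    also have "\<dots> = ((C * A ^\<^sub>m k) *\<^sub>v col T1 j) $ r" using r CA index_mult_mat_vec[of r "C * A ^\<^sub>m k" "col T1 j"] by auto
    also have "(C * A ^\<^sub>m k) *\<^sub>v col T1 j = C *\<^sub>v ((A ^\<^sub>m k) *\<^sub>v col T1 j)"
      using C pow_carrier_mat[OF A, of k] Kcar[OF cK] assoc_mult_mat_vec by blast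
    also have "\<dots> = 0\<^sub>v (2*m)" using KC KP cK by simp
    finally show "(obs_mat n C A * T1) $$ (i,j) = 0\<^sub>m ((2*n) * (2*m)) (2*l) $$ (i,j)"
      using i j r by simp
  qed (use C T in \<open>auto simp: obs_mat_def\<close>)
  have Ocar: "obs_mat n C A \<in> carrier_mat ((2*n) * (2*m)) (2*n)"
    unfolding obs_mat_def using C by auto
  have "obs_mat n C A * S * T1 = obs_mat n C A * (S * T1)"
    using Ocar S T by (simp add: assoc_mult_mat)
  also have "\<dots> = obs_mat n C A * (T1 * Sigma_mat l)" using assms(8) S_def by simp
  also have "\<dots> = (obs_mat n C A * T1) * Sigma_mat l"
    using Ocar T by (simp add: assoc_mult_mat[of _ _ "2*n" _ "2*l" _ "2*l"])
  also have "\<dots> = 0\<^sub>m ((2*n) * (2*m)) (2*l)" using O1 left_mult_zero_mat[OF Sigma_carrier[of l]] by simp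
  finally show ?thesis using O1 unfolding A_def S_def by simp
qed

end
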